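(* Let $G$ be a finite non-abelian group. Then the non-centralizer graph $\Upsilon_G$ is not $n$-regular for any integer $n$ that is a power of a prime (i.e. $n=p^k$ with $p$ prime and $k\geq 1$).
   Context: For a finite group $G$, $C_G(x)$ denotes the centralizer of $x\in G$. The non-centralizer graph $\Upsilon_G$ is the simple graph with vertex set $G$ in which two distinct vertices $x,y$ are adjacent if and only if $C_G(x)\neq C_G(y)$. A graph is $n$-regular if every vertex has degree exactly $n$. *)

theory Defs
  imports "HOL-Algebra.Algebra"
begin

definition centralizer :: "('a, 'b) monoid_scheme \<Rightarrow> 'a \<Rightarrow> 'a set" where
  "centralizer G x = {y \<in> carrier G. x \<otimes>\<^bsub>G\<^esub> y = y \<otimes>\<^bsub>G\<^esub> x}"

definition noncent_adj :: "('a, 'b) monoid_scheme \<Rightarrow> 'a \<Rightarrow> 'a \<Rightarrow> bool" where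
  "noncent_adj G x y \<longleftrightarrow> x \<noteq> y \<and> centralizer G x \<noteq> centralizer G y"

definition noncent_degree :: "('a, 'b) monoid_scheme \<Rightarrow> 'a \<Rightarrow> nat" where
  "noncent_degree G x = card {y \<in> carrier G. noncent_adj G x y}"

definition noncent_regular :: "('a, 'b) monoid_scheme \<Rightarrow> nat \<Rightarrow> bool" where
  "noncent_regular G n \<longleftrightarrow> (\<forall>x \<in> carrier G. noncent_degree G x = n)"

end

theory Submission
  imports Defs
begin

context group
begin

definition Zc where "Zc = {z \<in> carrier G. \<forall>g\<in>carrier G. z \<otimes> g = g \<otimes> z}"

lemma Zc_sub: "Zc \<subseteq> carrier G" unfolding Zc_def by auto

lemma Zc_comm: "z \<in> Zc \<Longrightarrow> g \<in> carrier G \<Longrightarrow> z \<otimes> g = g \<otimes> z"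
  unfolding Zc_def by auto

lemma Zc_subgroup: "subgroup Zc G"
proof (rule subgroupI)
  show "Zc \<subseteq> carrier G" by (rule Zc_sub)
  show "Zc \<noteq> {}" unfolding Zc_def by auto
next
  fix a assume a: "a \<in> Zc"
  hence ac: "a \<in> carrier G" using Zc_sub by auto
  have "inv a \<otimes> g = g \<otimes> inv a" if g: "g \<in> carrier G" for g
  proof -
    have "inv a \<otimes> g = inv a \<otimes> g \<otimes> (a \<otimes> inv a)" using ac g by simp
    also have "\<dots> = inv a \<otimes> (a \<otimes> g) \<otimes> inv a" using ac g Zc_comm[OF a g] by (simp add: m_assoc)
    also have "\<dots> = g \<otimes> inv a" using ac g by (simp add: m_assoc[symmetric])
    finally show ?thesis .
  qed
  then show "inv a \<in> Zc" using ac unfolding Zc_def by auto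
next
  fix a b assume a: "a \<in> Zc" and b: "b \<in> Zc"
  hence ac: "a \<in> carrier G" and bc: "b \<in> carrier G" using Zc_sub by auto
  have "a \<otimes> b \<otimes> g = g \<otimes> (a \<otimes> b)" if g: "g \<in> carrier G" for g
  proof -
    have "a \<otimes> b \<otimes> g = a \<otimes> (g \<otimes> b)" using ac bc g Zc_comm[OF b g] by (simp add: m_assoc)
    also have "\<dots> = (g \<otimes> a) \<otimes> b" using ac bc g Zc_comm[OF a g] by (simp add: m_assoc[symmetric])
    also have "\<dots> = g \<otimes> (a \<otimes> b)" using ac bc g by (simp add: m_assoc)
    finally show ?thesis .
  qed
  then show "a \<otimes> b \<in> Zc" using ac bc unfolding Zc_def by auto
qed

lemma Zc_inv: "z \<in> Zc \<Longrightarrow> inv z \<in> Zc"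
  by (rule subgroup.m_inv_closed[OF Zc_subgroup])

lemma Zc_mult: "a \<in> Zc \<Longrightarrow> b \<in> Zc \<Longrightarrow> a \<otimes> b \<in> Zc"
  by (rule subgroup.m_closed[OF Zc_subgroup])

lemma centralizer_eq_carrier:
  assumes x: "x \<in> carrier G"
  shows "centralizer G x = carrier G \<longleftrightarrow> x \<in> Zc"
proof
  assume "centralizer G x = carrier G"
  hence "\<forall>g\<in>carrier G. x \<otimes> g = g \<otimes> x" unfolding centralizer_def by blast
  thus "x \<in> Zc" using x unfolding Zc_def by blast
next
  assume "x \<in> Zc"
  hence h: "\<forall>g\<in>carrier G. x \<otimes> g = g \<otimes> x" unfolding Zc_def by blast
  show "centralizer G x = carrier G"
  proof (rule Set.set_eqI)
    fix y show "y \<in> centralizer G x \<longleftrightarrow> y \<in> carrier G" using h unfolding centralizer_def by auto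
  qed
qed

lemma centralizer_mult_Zc:
  assumes x: "x \<in> carrier G" and z: "z \<in> Zc"
  shows "centralizer G (x \<otimes> z) = centralizer G x"
proof -
  have zc: "z \<in> carrier G" using z Zc_sub by auto
  have "(x \<otimes> z) \<otimes> y = y \<otimes> (x \<otimes> z) \<longleftrightarrow> x \<otimes> y = y \<otimes> x" if y: "y \<in> carrier G" for y
  proof -
    have "(x \<otimes> z) \<otimes> y = x \<otimes> (z \<otimes> y)" using x y zc by (simp add: m_assoc)
    also have "\<dots> = x \<otimes> (y \<otimes> z)" using Zc_comm[OF z y] by simp
    also have "\<dots> = (x \<otimes> y) \<otimes> z" using x y zc by (simp add: m_assoc)
    finally have 1: "(x \<otimes> z) \<otimes> y = (x \<otimes> y) \<otimes> z" .
    have 2: "y \<otimes> (x \<otimes> z) = (y \<otimes> x) \<otimes> z" using x y zc by (simp add: m_assoc)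
    show ?thesis unfolding 1 2 using r_cancel[of z "x \<otimes> y" "y \<otimes> x"] x y zc by simp
  qed
  then show ?thesis unfolding centralizer_def by (intro Collect_cong) blast
qed

lemma centralizer_inv:
  assumes x: "x \<in> carrier G"
  shows "centralizer G (inv x) = centralizer G x"
proof -
  have "inv x \<otimes> y = y \<otimes> inv x \<longleftrightarrow> x \<otimes> y = y \<otimes> x" if y: "y \<in> carrier G" for y
  proof
    assume h: "inv x \<otimes> y = y \<otimes> inv x"
    have "x \<otimes> y = x \<otimes> (y \<otimes> inv x) \<otimes> x" using x y by (simp add: m_assoc)
    also have "\<dots> = x \<otimes> (inv x \<otimes> y) \<otimes> x" using h by simp
    also have "\<dots> = y \<otimes> x" using x y by (simp add: m_assoc[symmetric])
    finally show "x \<otimes> y = y \<otimes> x" .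
  next
    assume h: "x \<otimes> y = y \<otimes> x"
    have "inv x \<otimes> y = inv x \<otimes> (y \<otimes> x) \<otimes> inv x" using x y by (simp add: m_assoc)
    also have "\<dots> = y \<otimes> inv x" using x y h[symmetric] by (simp add: m_assoc[symmetric])
    finally show "inv x \<otimes> y = y \<otimes> inv x" .
  qed
  then show ?thesis unfolding centralizer_def by (intro Collect_cong) blast
qed

definition Sx where "Sx x = {y \<in> carrier G. centralizer G y = centralizer G x}"

lemma degree_eq:
  assumes "finite (carrier G)" "x \<in> carrier G"
  shows "noncent_degree G x = card (carrier G) - card (Sx x)"
proof -
  have "{y \<in> carrier G. noncent_adj G x y} = carrier G - Sx x"
    unfolding noncent_adj_def Sx_def by blast
  moreover have "Sx x \<subseteq> carrier G" unfolding Sx_def by blast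
  moreover have "finite (Sx x)" using finite_subset[OF calculation(2) assms(1)] .
  ultimately show ?thesis unfolding noncent_degree_def
    using card_Diff_subset[of "Sx x" "carrier G"] by presburger
qed

lemma S_one: "Sx \<one> = Zc"
proof -
  have "centralizer G \<one> = carrier G" unfolding centralizer_def by auto
  then have "Sx \<one> = {y \<in> carrier G. centralizer G y = carrier G}" unfolding Sx_def by simp
  also have "\<dots> = {y \<in> carrier G. y \<in> Zc}" using centralizer_eq_carrier by blast
  also have "\<dots> = Zc" using Zc_sub by blast
  finally show ?thesis .
qed

lemma squares_central:
  assumes fin: "finite (carrier G)" and reg: "noncent_regular G n" and x: "x \<in> carrier G"
  shows "x \<otimes> x \<in> Zc"
proof -
  have sub: "Sx y \<subseteq> carrier G" for y unfolding Sx_def by blast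
  have "noncent_degree G x = noncent_degree G \<one>" using reg x unfolding noncent_regular_def by auto
  hence "card (carrier G) - card (Sx x) = card (carrier G) - card Zc"
    using degree_eq[OF fin] x S_one by simp
  moreover have "card (Sx x) \<le> card (carrier G)" "card Zc \<le> card (carrier G)"
    using sub Zc_sub fin by (auto intro: card_mono)
  ultimately have cs: "card (Sx x) = card Zc" by linarith
  have inj: "inj_on (\<lambda>z. x \<otimes> z) Zc"
  proof (rule inj_onI)
    fix a b assume "a \<in> Zc" "b \<in> Zc" "x \<otimes> a = x \<otimes> b"
    moreover have "a \<in> carrier G" "b \<in> carrier G" using \<open>a \<in> Zc\<close> \<open>b \<in> Zc\<close> Zc_sub by auto
    ultimately show "a = b" using l_cancel[of x a b] x by simp
  qed
  have im: "(\<lambda>z. x \<otimes> z) ` Zc \<subseteq> Sx x"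
    using x Zc_sub centralizer_mult_Zc unfolding Sx_def by auto
  have "card ((\<lambda>z. x \<otimes> z) ` Zc) = card Zc" using card_image[OF inj] .
  hence eq: "(\<lambda>z. x \<otimes> z) ` Zc = Sx x"
    using card_subset_eq[OF finite_subset[OF sub fin] im] cs by simp
  have "inv x \<in> Sx x" using x centralizer_inv unfolding Sx_def by auto
  then obtain z where z: "z \<in> Zc" and iz: "inv x = x \<otimes> z" using eq by blast
  have zc: "z \<in> carrier G" using z Zc_sub by auto
  have "(x \<otimes> x) \<otimes> z = \<one>"
  proof -
    have "(x \<otimes> x) \<otimes> z = x \<otimes> (x \<otimes> z)" using x zc by (simp add: m_assoc)
    also have "\<dots> = \<one>" using iz[symmetric] x by simp
    finally show ?thesis .
  qed
  hence "inv z = x \<otimes> x" using x zc inv_equality[of "x \<otimes> x" z] by simp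
  thus ?thesis using Zc_inv[OF z] by simp
qed

lemma commutator_central:
  assumes sq: "\<And>g. g \<in> carrier G \<Longrightarrow> g \<otimes> g \<in> Zc"
    and x: "x \<in> carrier G" and y: "y \<in> carrier G"
  shows "\<exists>d\<in>Zc. x \<otimes> y = d \<otimes> (y \<otimes> x) \<and> d \<otimes> d = \<one>"
proof -
  define w where "w = (x \<otimes> y) \<otimes> (x \<otimes> y)"
  define a where "a = inv (x \<otimes> x)"
  define b where "b = inv (y \<otimes> y)"
  have wZ: "w \<in> Zc" unfolding w_def using sq x y by simp
  have aZ: "a \<in> Zc" unfolding a_def using sq x Zc_inv by simp
  have bZ: "b \<in> Zc" unfolding b_def using sq y Zc_inv by simp
  have wc: "w \<in> carrier G" and ac: "a \<in> carrier G" and bc: "b \<in> carrier G"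
    using wZ aZ bZ Zc_sub by auto
  have ia: "inv x = a \<otimes> x"
  proof -
    have "(a \<otimes> x) \<otimes> x = \<one>" unfolding a_def using x by (simp add: m_assoc)
    thus ?thesis using x ac inv_equality[of "a \<otimes> x" x] by simp
  qed
  have ib: "inv y = b \<otimes> y"
  proof -
    have "(b \<otimes> y) \<otimes> y = \<one>" unfolding b_def using y by (simp add: m_assoc)
    thus ?thesis using y bc inv_equality[of "b \<otimes> y" y] by simp
  qed
  define d where "d = w \<otimes> b \<otimes> a"
  have dZ: "d \<in> Zc" unfolding d_def using wZ aZ bZ Zc_mult by simp
  have dc: "d \<in> carrier G" using dZ Zc_sub by auto
  have e1: "x \<otimes> y = d \<otimes> (y \<otimes> x)"
  proof -
    have "x \<otimes> y = w \<otimes> inv (x \<otimes> y)" unfolding w_def using x y by (simp add: m_assoc)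
    also have "\<dots> = w \<otimes> (inv y \<otimes> inv x)" using x y by (simp add: inv_mult_group)
    also have "\<dots> = w \<otimes> ((b \<otimes> y) \<otimes> (a \<otimes> x))" using ia ib by simp
    also have "\<dots> = w \<otimes> (b \<otimes> ((y \<otimes> a) \<otimes> x))" using x y ac bc by (simp add: m_assoc)
    also have "\<dots> = w \<otimes> (b \<otimes> ((a \<otimes> y) \<otimes> x))" using Zc_comm[OF aZ y] by simp
    also have "\<dots> = d \<otimes> (y \<otimes> x)" unfolding d_def using x y ac bc wc by (simp add: m_assoc)
    finally show ?thesis .
  qed
  have "(d \<otimes> d) \<otimes> (y \<otimes> (x \<otimes> x)) = \<one> \<otimes> (y \<otimes> (x \<otimes> x))"
  proof -
    have "\<one> \<otimes> (y \<otimes> (x \<otimes> x)) = (x \<otimes> x) \<otimes> y"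
      using Zc_comm[OF sq[OF x] y] x y by simp
    also have "\<dots> = x \<otimes> (x \<otimes> y)" using x y by (simp add: m_assoc)
    also have "\<dots> = x \<otimes> (d \<otimes> (y \<otimes> x))" using e1 by simp
    also have "\<dots> = (x \<otimes> d) \<otimes> (y \<otimes> x)" using x y dc by (simp add: m_assoc)
    also have "\<dots> = (d \<otimes> x) \<otimes> (y \<otimes> x)" using Zc_comm[OF dZ x] by simp
    also have "\<dots> = d \<otimes> (x \<otimes> y) \<otimes> x" using x y dc by (simp add: m_assoc)
    also have "\<dots> = d \<otimes> (d \<otimes> (y \<otimes> x)) \<otimes> x" using e1 by simp
    also have "\<dots> = (d \<otimes> d) \<otimes> (y \<otimes> (x \<otimes> x))" using x y dc by (simp add: m_assoc)
    finally show ?thesis by simp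
  qed
  hence "d \<otimes> d = \<one>" using x y dc r_cancel[of "y \<otimes> (x \<otimes> x)" "d \<otimes> d" "\<one>"] by simp
  thus ?thesis using dZ e1 by blast
qed

lemma card_subgroup_dvd:
  assumes "finite (carrier G)" "subgroup I G" "subgroup J G" "I \<subseteq> J"
  shows "card I dvd card J"
proof -
  have g: "group (G\<lparr>carrier := J\<rparr>)" using subgroup.subgroup_is_group[OF assms(3) is_group] .
  have "subgroup I (G\<lparr>carrier := J\<rparr>)" using subgroup_incl[OF assms(2-4)] .
  from group.lagrange[OF g this] have "card (rcosets\<^bsub>G\<lparr>carrier := J\<rparr>\<^esub> I) * card I = card J"
    by (simp add: order_def)
  thus ?thesis by (metis dvd_triv_right)
qed


lemma coset_subgroup:
  assumes x: "x \<in> carrier G" and sqx: "x \<otimes> x \<in> Zc"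
  shows "subgroup (Zc \<union> (\<lambda>z. x \<otimes> z) ` Zc) G"
proof (rule subgroupI)
  have Zs: "Zc \<subseteq> carrier G" by (rule Zc_sub)
  show "Zc \<union> (\<lambda>z. x \<otimes> z) ` Zc \<subseteq> carrier G" using Zs x by auto
  show "Zc \<union> (\<lambda>z. x \<otimes> z) ` Zc \<noteq> {}" using subgroup.one_closed[OF Zc_subgroup] by blast
next
  have Zs: "Zc \<subseteq> carrier G" by (rule Zc_sub)
  define s where "s = inv (x \<otimes> x)"
  have sZ: "s \<in> Zc" unfolding s_def using Zc_inv[OF sqx] .
  have sc: "s \<in> carrier G" using sZ Zs by auto
  have ix: "inv x = x \<otimes> s"
  proof -
    have "(x \<otimes> s) \<otimes> x = x \<otimes> (s \<otimes> x)" using x sc by (simp add: m_assoc)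
    also have "\<dots> = x \<otimes> (x \<otimes> s)" using Zc_comm[OF sZ x] by simp
    also have "\<dots> = (x \<otimes> x) \<otimes> s" using x sc by (simp add: m_assoc)
    also have "\<dots> = \<one>" unfolding s_def using x by simp
    finally show ?thesis using inv_equality[of "x \<otimes> s" x] x sc by simp
  qed
  fix a assume a: "a \<in> Zc \<union> (\<lambda>z. x \<otimes> z) ` Zc"
  show "inv a \<in> Zc \<union> (\<lambda>z. x \<otimes> z) ` Zc"
  proof (cases "a \<in> Zc")
    case True thus ?thesis using Zc_inv by blast
  next
    case False
    then obtain z where z: "z \<in> Zc" and az: "a = x \<otimes> z" using a by blast
    have zc: "z \<in> carrier G" using z Zs by auto
    have "inv a = inv z \<otimes> inv x" using az x zc inv_mult_group by simp
    also have "\<dots> = inv z \<otimes> (x \<otimes> s)" using ix by simp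
    also have "\<dots> = (inv z \<otimes> x) \<otimes> s" using x zc sc by (simp add: m_assoc)
    also have "\<dots> = (x \<otimes> inv z) \<otimes> s" using Zc_comm[OF Zc_inv[OF z] x] by simp
    also have "\<dots> = x \<otimes> (inv z \<otimes> s)" using x zc sc by (simp add: m_assoc)
    finally have "inv a = x \<otimes> (inv z \<otimes> s)" .
    moreover have "inv z \<otimes> s \<in> Zc" using Zc_mult[OF Zc_inv[OF z] sZ] .
    ultimately show ?thesis by blast
  qed
next
  have Zs: "Zc \<subseteq> carrier G" by (rule Zc_sub)
  fix a b assume a: "a \<in> Zc \<union> (\<lambda>z. x \<otimes> z) ` Zc" and b: "b \<in> Zc \<union> (\<lambda>z. x \<otimes> z) ` Zc"
  show "a \<otimes> b \<in> Zc \<union> (\<lambda>z. x \<otimes> z) ` Zc"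
  proof (cases "a \<in> Zc")
    case aZ: True
    have ac: "a \<in> carrier G" using aZ Zs by auto
    show ?thesis
    proof (cases "b \<in> Zc")
      case True thus ?thesis using Zc_mult[OF aZ] by blast
    next
      case False
      then obtain z where z: "z \<in> Zc" and bz: "b = x \<otimes> z" using b by blast
      have zc: "z \<in> carrier G" using z Zs by auto
      have "a \<otimes> b = (a \<otimes> x) \<otimes> z" using bz ac x zc by (simp add: m_assoc)
      also have "\<dots> = (x \<otimes> a) \<otimes> z" using Zc_comm[OF aZ x] by simp
      also have "\<dots> = x \<otimes> (a \<otimes> z)" using ac x zc by (simp add: m_assoc)
      finally show ?thesis using Zc_mult[OF aZ z] by blast
    qed
  next
    case False
    then obtain z where z: "z \<in> Zc" and az: "a = x \<otimes> z" using a by blast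
    have zc: "z \<in> carrier G" using z Zs by auto
    show ?thesis
    proof (cases "b \<in> Zc")
      case True
      have "a \<otimes> b = x \<otimes> (z \<otimes> b)" using az True Zs x zc by (auto simp: m_assoc)
      thus ?thesis using Zc_mult[OF z True] by blast
    next
      case False
      then obtain w where w: "w \<in> Zc" and bw: "b = x \<otimes> w" using b by blast
      have wc: "w \<in> carrier G" using w Zs by auto
      have "a \<otimes> b = x \<otimes> (z \<otimes> x) \<otimes> w" using az bw x zc wc by (simp add: m_assoc)
      also have "\<dots> = x \<otimes> (x \<otimes> z) \<otimes> w" using Zc_comm[OF z x] by simp
      also have "\<dots> = (x \<otimes> x) \<otimes> (z \<otimes> w)" using x zc wc by (simp add: m_assoc)
      finally have "a \<otimes> b \<in> Zc" using Zc_mult[OF sqx Zc_mult[OF z w]] by simp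
      thus ?thesis by (rule UnI1)
    qed
  qed
qed

lemma main_contra:
  assumes fin: "finite (carrier G)" and nc: "\<not> comm_group G"
    and p: "Factorial_Ring.prime p" and k: "k \<ge> 1" and reg: "noncent_regular G (p ^ k)"
  shows False
proof -
  have sq: "\<And>g. g \<in> carrier G \<Longrightarrow> g \<otimes> g \<in> Zc" using squares_central[OF fin reg] .
  have "noncent_degree G \<one> = p ^ k" using reg unfolding noncent_regular_def by simp
  hence n: "card (carrier G) - card Zc = p ^ k" using degree_eq[OF fin one_closed] S_one by simp
  have Zle: "card Zc \<le> card (carrier G)" using card_mono[OF fin Zc_sub] .
  have dvdG: "card Zc dvd card (carrier G)"
    using card_subgroup_dvd[OF fin Zc_subgroup subgroup_self Zc_sub] .
  have "card Zc dvd p ^ k" using dvd_diff_nat[OF dvdG dvd_refl[of "card Zc"]] n by simp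
  then obtain a where ak: "a \<le> k" and na: "normalize (card Zc) = p ^ a"
    using divides_primepow[OF p] by blast
  have ca: "card Zc = p ^ a" using na by simp
  have cG: "card (carrier G) = p ^ k + p ^ a" using n Zle ca by linarith
  have ex: "\<exists>x\<in>carrier G. x \<notin> Zc"
  proof (rule ccontr)
    assume "\<not> ?thesis"
    hence "\<And>x y. x \<in> carrier G \<Longrightarrow> y \<in> carrier G \<Longrightarrow> x \<otimes> y = y \<otimes> x"
      using Zc_comm by blast
    thus False using nc group_comm_groupI by blast
  qed
  then obtain x where x: "x \<in> carrier G" and xZ: "x \<notin> Zc" by blast
  show False
  proof (cases "p = 2")
    case True
    define H where "H = Zc \<union> (\<lambda>z. x \<otimes> z) ` Zc"
    have Hs: "subgroup H G" unfolding H_def using coset_subgroup[OF x sq[OF x]] .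
    have inj: "inj_on (\<lambda>z. x \<otimes> z) Zc"
    proof (rule inj_onI)
      fix a b assume "a \<in> Zc" "b \<in> Zc" "x \<otimes> a = x \<otimes> b"
      moreover have "a \<in> carrier G" "b \<in> carrier G" using \<open>a \<in> Zc\<close> \<open>b \<in> Zc\<close> Zc_sub by auto
      ultimately show "a = b" using l_cancel[of x a b] x by simp
    qed
    have disj: "Zc \<inter> (\<lambda>z. x \<otimes> z) ` Zc = {}"
    proof (rule ccontr)
      assume "Zc \<inter> (\<lambda>z. x \<otimes> z) ` Zc \<noteq> {}"
      then obtain z where z: "z \<in> Zc" and xz: "x \<otimes> z \<in> Zc" by blast
      have zc: "z \<in> carrier G" using z Zc_sub by auto
      have "x = (x \<otimes> z) \<otimes> inv z" using x zc by (simp add: m_assoc)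
      hence "x \<in> Zc" using Zc_mult[OF xz Zc_inv[OF z]] by simp
      thus False using xZ by simp
    qed
    have finZ: "finite Zc" using finite_subset[OF Zc_sub fin] .
    have cH: "card H = 2 * p ^ a"
      unfolding H_def using card_Un_disjoint[OF finZ finite_imageI[OF finZ] disj]
        card_image[OF inj] ca by simp
    have HG: "H \<subseteq> carrier G" using subgroup.subset[OF Hs] .
    have "card H dvd card (carrier G)"
      using card_subgroup_dvd[OF fin Hs subgroup_self HG] .
    hence dv: "2 * 2 ^ a dvd (2::nat) ^ k + 2 ^ a" using cH cG True by simp
    show False
    proof (cases "a < k")
      case True
      have "(2::nat) ^ k + 2 ^ a = 2 ^ a * (2 ^ (k - a) + 1)"
        using True by (simp add: algebra_simps flip: power_add)
      hence "2 * 2 ^ a dvd 2 ^ a * ((2::nat) ^ (k - a) + 1)" using dv by (simp only:)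
      hence "2 ^ a * 2 dvd 2 ^ a * ((2::nat) ^ (k - a) + 1)" by (simp only: mult.commute)
      moreover have nz: "(2::nat) ^ a \<noteq> 0" by simp
      ultimately have "2 dvd (2::nat) ^ (k - a) + 1" by (simp only: dvd_times_left_cancel_iff[OF nz])
      moreover have "even ((2::nat) ^ (k - a))" using True by simp
      ultimately show False by simp
    next
      case False
      hence "a = k" using ak by simp
      hence "card H = card (carrier G)" using cH cG True by simp
      hence Heq: "H = carrier G" using card_subset_eq[OF fin HG] by simp
      have "x \<otimes> g = g \<otimes> x" if g: "g \<in> carrier G" for g
      proof (cases "g \<in> Zc")
        case True thus ?thesis using Zc_comm[OF True x] by simp
      next
        case False
        then obtain z where z: "z \<in> Zc" and gz: "g = x \<otimes> z" using g Heq unfolding H_def by blast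
        have zc: "z \<in> carrier G" using z Zc_sub by auto
        have "x \<otimes> g = x \<otimes> (x \<otimes> z)" using gz by simp
        also have "\<dots> = x \<otimes> (z \<otimes> x)" using Zc_comm[OF z x] by simp
        also have "\<dots> = g \<otimes> x" using gz x zc by (simp add: m_assoc)
        finally show ?thesis .
      qed
      hence "x \<in> Zc" using x unfolding Zc_def by blast
      thus False using xZ by simp
    qed
  next
    case False
    have p2: "p > 2" using False prime_ge_2_nat[OF p] by simp
    have oddZ: "odd (card Zc)" using ca prime_odd_nat[OF p p2] by simp
    have "x \<otimes> y = y \<otimes> x" if xc: "x \<in> carrier G" and yc: "y \<in> carrier G" for x y
    proof -
      obtain d where dZ: "d \<in> Zc" and e: "x \<otimes> y = d \<otimes> (y \<otimes> x)" and dd: "d \<otimes> d = \<one>"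
        using commutator_central[OF sq xc yc] by blast
      have dc: "d \<in> carrier G" using dZ Zc_sub by auto
      have "d = \<one>"
      proof (rule ccontr)
        assume dn: "d \<noteq> \<one>"
        have idd: "inv d = d" using inv_equality[of d d] dd dc by simp
        have K: "subgroup {\<one>, d} G"
        proof (rule subgroupI)
          show "{\<one>, d} \<subseteq> carrier G" using dc by simp
          show "{\<one>, d} \<noteq> {}" by simp
        next
          fix a assume "a \<in> {\<one>, d}" thus "inv a \<in> {\<one>, d}" using idd by auto
        next
          fix a b assume "a \<in> {\<one>, d}" "b \<in> {\<one>, d}"
          thus "a \<otimes> b \<in> {\<one>, d}" using dd dc by auto
        qed
        have "{\<one>, d} \<subseteq> Zc" using dZ subgroup.one_closed[OF Zc_subgroup] by simp
        from card_subgroup_dvd[OF fin K Zc_subgroup this]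
        have "card {\<one>, d} dvd card Zc" .
        moreover have "card {\<one>, d} = 2" using dn by simp
        ultimately show False using oddZ by simp
      qed
      thus ?thesis using e xc yc by simp
    qed
    thus False using nc group_comm_groupI by blast
  qed
qed

end

theorem corollary2p11:
  fixes G :: "('a, 'b) monoid_scheme" and p k :: nat
  assumes "group G" and "finite (carrier G)" and "\<not> comm_group G"
    and "Factorial_Ring.prime p" and "k \<ge> 1"
  shows "\<not> noncent_regular G (p ^ k)"
  using group.main_contra[OF assms(1) assms(2) assms(3) assms(4) assms(5)] by blast

end
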